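(* Every simple undirected graph $G$ is the intersection graph of an exactly hittable hypergraph $\mathcal{X}=(\mathcal{U},\mathcal{F})$. Further, if $G$ is a connected chordal graph, then $G$ is the intersection graph of an exactly hittable family of subtrees of a tree.
   Context: The intersection graph of a family $\mathcal{F}$ of sets has one vertex $v_F$ for each $F\in\mathcal{F}$, with $v_{F_i}v_{F_j}$ an edge iff $F_i\cap F_j\neq\emptyset$. A hypergraph (set system) $(\mathcal{U},\mathcal{F})$ is exactly hittable if there is $T\subseteq\mathcal{U}$ with $|T\cap F|=1$ for all $F\in\mathcal{F}$; for a family of subtrees of a tree, exact hittability means there is a set $T$ of tree nodes meeting every subtree in exactly one node. A chordal graph is a graph with no induced cycle of length at least $4$. *)

theory Defs
  imports Main
begin

definition simple_graph :: "'a set \<Rightarrow> ('a \<Rightarrow> 'a \<Rightarrow> bool) \<Rightarrow> bool" where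
  "simple_graph V E \<longleftrightarrow> finite V \<and>
     (\<forall>u v. E u v \<longrightarrow> u \<in> V \<and> v \<in> V \<and> u \<noteq> v \<and> E v u)"

definition is_walk :: "('a \<Rightarrow> 'a \<Rightarrow> bool) \<Rightarrow> 'a list \<Rightarrow> bool" where
  "is_walk E xs \<longleftrightarrow> xs \<noteq> [] \<and> (\<forall>i. Suc i < length xs \<longrightarrow> E (xs ! i) (xs ! Suc i))"

definition connected_on :: "'a set \<Rightarrow> ('a \<Rightarrow> 'a \<Rightarrow> bool) \<Rightarrow> bool" where
  "connected_on V E \<longleftrightarrow>
     (\<forall>u\<in>V. \<forall>v\<in>V. \<exists>xs. is_walk E xs \<and> set xs \<subseteq> V \<and> hd xs = u \<and> last xs = v)"

definition is_cycle :: "('a \<Rightarrow> 'a \<Rightarrow> bool) \<Rightarrow> 'a list \<Rightarrow> bool" where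
  "is_cycle E xs \<longleftrightarrow> length xs \<ge> 3 \<and> distinct xs \<and> is_walk E xs \<and> E (last xs) (hd xs)"

definition induced_cycle :: "('a \<Rightarrow> 'a \<Rightarrow> bool) \<Rightarrow> 'a list \<Rightarrow> bool" where
  "induced_cycle E xs \<longleftrightarrow> is_cycle E xs \<and>
     (\<forall>i<length xs. \<forall>j<length xs. E (xs ! i) (xs ! j) \<longrightarrow>
        j = Suc i mod length xs \<or> i = Suc j mod length xs)"

definition chordal :: "'a set \<Rightarrow> ('a \<Rightarrow> 'a \<Rightarrow> bool) \<Rightarrow> bool" where
  "chordal V E \<longleftrightarrow> \<not> (\<exists>xs. set xs \<subseteq> V \<and> length xs \<ge> 4 \<and> induced_cycle E xs)"

definition is_tree :: "'b set \<Rightarrow> ('b \<Rightarrow> 'b \<Rightarrow> bool) \<Rightarrow> bool" where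
  "is_tree N A \<longleftrightarrow> simple_graph N A \<and> N \<noteq> {} \<and> connected_on N A \<and>
     \<not> (\<exists>xs. set xs \<subseteq> N \<and> is_cycle A xs)"

definition is_subtree :: "'b set \<Rightarrow> ('b \<Rightarrow> 'b \<Rightarrow> bool) \<Rightarrow> 'b set \<Rightarrow> bool" where
  "is_subtree N A S \<longleftrightarrow> S \<noteq> {} \<and> S \<subseteq> N \<and> connected_on S A"

definition exactly_hittable :: "'b set \<Rightarrow> 'b set set \<Rightarrow> bool" where
  "exactly_hittable U F \<longleftrightarrow> (\<exists>T. T \<subseteq> U \<and> (\<forall>X\<in>F. card (T \<inter> X) = 1))"

text \<open>G = (V,E) is (isomorphic to) the intersection graph of the family S ` V,
  the isomorphism being v \<mapsto> S v (injective, as F is a set of sets).\<close>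
definition is_intersection_graph_of :: "'a set \<Rightarrow> ('a \<Rightarrow> 'a \<Rightarrow> bool) \<Rightarrow> ('a \<Rightarrow> 'b set) \<Rightarrow> bool" where
  "is_intersection_graph_of V E S \<longleftrightarrow> inj_on S V \<and>
     (\<forall>u\<in>V. \<forall>v\<in>V. u \<noteq> v \<longrightarrow> (E u v \<longleftrightarrow> S u \<inter> S v \<noteq> {}))"

end

theory Submission
  imports Defs "HOL-Library.Nat_Bijection"
begin


lemma walk_single[simp]: "is_walk E [x]"
  by (simp add: is_walk_def)

lemma walk_Cons2[simp]: "is_walk E (x # y # r) \<longleftrightarrow> E x y \<and> is_walk E (y # r)"
  unfolding is_walk_def
proof (intro iffI conjI allI impI; (elim conjE)?)
  assume h: "\<forall>i. Suc i < length (x # y # r) \<longrightarrow> E ((x # y # r) ! i) ((x # y # r) ! Suc i)"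
  show "E x y" using h[rule_format, of 0] by simp
  show "y # r \<noteq> []" by simp
  fix i assume "Suc i < length (y # r)"
  then show "E ((y # r) ! i) ((y # r) ! Suc i)" using h[rule_format, of "Suc i"] by simp
next
  fix i assume "E x y" "\<forall>i. Suc i < length (y # r) \<longrightarrow> E ((y # r) ! i) ((y # r) ! Suc i)"
    "Suc i < length (x # y # r)"
  then show "E ((x # y # r) ! i) ((x # y # r) ! Suc i)"
    by (cases i) auto
qed simp

lemma walk_Nil[simp]: "\<not> is_walk E []" by (simp add: is_walk_def)

lemma walk_Cons: "is_walk E (x # r) \<longleftrightarrow> (r = [] \<or> (E x (hd r) \<and> is_walk E r))"
  by (cases r) auto

lemma walk_append: "xs \<noteq> [] \<Longrightarrow> ys \<noteq> [] \<Longrightarrow>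
   is_walk E (xs @ ys) \<longleftrightarrow> is_walk E xs \<and> is_walk E ys \<and> E (last xs) (hd ys)"
proof (induction xs)
  case Nil then show ?case by simp
next
  case (Cons a xs)
  show ?case
  proof (cases xs)
    case Nil then show ?thesis using Cons.prems by (cases ys) (auto simp: walk_Cons)
  next
    case (Cons b zs)
    then show ?thesis using Cons.IH Cons.prems by (auto simp: walk_Cons)
  qed
qed

lemma walk_mono_on: "is_walk E xs \<Longrightarrow> (\<forall>u\<in>set xs. \<forall>v\<in>set xs. E u v \<longrightarrow> E' u v) \<Longrightarrow> is_walk E' xs"
  by (induction xs rule: induct_list012) auto

lemma walk_rev: "(\<And>u v. E u v \<Longrightarrow> E v u) \<Longrightarrow> is_walk E xs \<Longrightarrow> is_walk E (rev xs)"
proof (induction xs rule: induct_list012)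
  case (3 x y zs)
  then show ?case using walk_append[of "rev zs @ [y]" "[x]" E] by auto
qed auto



lemma walk_take: "is_walk E p \<Longrightarrow> 0 < n \<Longrightarrow> is_walk E (take n p)"
  unfolding is_walk_def by auto

lemma walk_drop: "is_walk E p \<Longrightarrow> j < length p \<Longrightarrow> is_walk E (drop j p)"
  unfolding is_walk_def by (auto simp: add.commute[of j])

lemma walk_shortcut:
  assumes "is_walk E p" "i < j" "j < length p" "E (p!i) (p!j)"
  shows "is_walk E (take (Suc i) p @ drop j p)"
proof -
  have "last (take (Suc i) p) = p ! i" using assms by (simp add: take_Suc_conv_app_nth)
  moreover have "hd (drop j p) = p ! j" using assms by (simp add: hd_drop_conv_nth)
  ultimately show ?thesis using assms
    by (subst walk_append) (auto simp: walk_take walk_drop)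
qed

lemma walk_shortcut_eq:
  assumes "is_walk E p" "i < j" "j < length p" "p!i = p!j"
  shows "is_walk E (take (Suc i) p @ drop (Suc j) p)"
proof (cases "Suc j < length p")
  case True
  have "last (take (Suc i) p) = p ! i" using assms by (simp add: take_Suc_conv_app_nth)
  moreover have "hd (drop (Suc j) p) = p ! Suc j" using True by (simp add: hd_drop_conv_nth)
  moreover have "E (p!j) (p! Suc j)" using assms True unfolding is_walk_def by auto
  ultimately show ?thesis using assms True
    by (subst walk_append) (auto simp: walk_take walk_drop)
next
  case False
  then show ?thesis using assms by (simp add: walk_take)
qed



lemma path_to_induced_cycle:
  assumes sym: "\<And>u v. E u v \<Longrightarrow> E v u" and irr: "\<And>u. \<not> E u u"
    and xy: "x \<noteq> y" "\<not> E x y" and ax: "E a x" "E a y" and aZ: "a \<notin> Z"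
    and aZ2: "\<And>z. z \<in> Z \<Longrightarrow> E a z \<Longrightarrow> z = x \<or> z = y"
    and p0: "is_walk E p0" "hd p0 = x" "last p0 = y" "set p0 \<subseteq> Z"
  shows "\<exists>xs. set xs \<subseteq> insert a Z \<and> 4 \<le> length xs \<and> induced_cycle E xs"
proof -
  define P where "P p \<longleftrightarrow> is_walk E p \<and> hd p = x \<and> last p = y \<and> set p \<subseteq> Z" for p
  have "P p0" using p0 by (simp add: P_def)
  then obtain p where Pp: "P p" and pmin: "\<And>q. P q \<Longrightarrow> length p \<le> length q"
    using ex_has_least_nat[of P p0 length] by blast
  have pw: "is_walk E p" and ph: "hd p = x" and pl: "last p = y" and pZ: "set p \<subseteq> Z"
    using Pp by (auto simp: P_def)
  have pne: "p \<noteq> []" using pw by auto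
  define n where "n = length p"
  have setsub: "set (take k p @ drop m p) \<subseteq> set p" for k m
    by (auto dest: in_set_takeD in_set_dropD)
  have hdq: "hd (take (Suc i) p @ ys) = x" for i ys
    using pne ph by (cases p) auto
  have dist: "distinct p"
  proof (rule ccontr)
    assume "\<not> distinct p"
    then obtain i j where ij: "i < j" "j < n" "p!i = p!j"
      by (auto simp: distinct_conv_nth n_def) (metis linorder_neqE_nat)
    define q where "q = take (Suc i) p @ drop (Suc j) p"
    have "is_walk E q" unfolding q_def using walk_shortcut_eq[OF pw ij(1) _ ij(3)] ij by (simp add: n_def)
    moreover have "last q = y"
    proof (cases "Suc j < n")
      case True then show ?thesis using pl by (simp add: q_def n_def)
    next
      case False then have "j = n - 1" using ij by simp
      then have "p ! i = last p" using ij pne by (simp add: last_conv_nth n_def)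
      then show ?thesis using False ij pl by (simp add: q_def n_def take_Suc_conv_app_nth)
    qed
    moreover have "set q \<subseteq> Z" using setsub pZ unfolding q_def by (meson order_trans)
    ultimately have "P q" using hdq by (auto simp: P_def q_def)
    moreover have "length q < length p" using ij by (simp add: q_def n_def)
    ultimately show False using pmin by fastforce
  qed
  have chord: "j = Suc i" if ij: "i < j" "j < n" "E (p!i) (p!j)" for i j
  proof (rule ccontr)
    assume "j \<noteq> Suc i"
    then have ij2: "Suc i < j" using ij by simp
    define q where "q = take (Suc i) p @ drop j p"
    have "is_walk E q" unfolding q_def using walk_shortcut[OF pw ij(1) _ ij(3)] ij by (simp add: n_def)
    moreover have "last q = y" using pl ij by (simp add: q_def n_def)
    moreover have "set q \<subseteq> Z" using setsub pZ unfolding q_def by (meson order_trans)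
    ultimately have "P q" using hdq by (auto simp: P_def q_def)
    moreover have "length q < length p" using ij2 ij by (simp add: q_def n_def)
    ultimately show False using pmin by fastforce
  qed
  have p0x: "p ! 0 = x" using ph pne by (simp add: hd_conv_nth)
  have plx: "p ! (n - 1) = y" using pl pne by (simp add: last_conv_nth n_def)
  have n3: "3 \<le> n"
  proof -
    have "n \<noteq> 0" using pne by (simp add: n_def)
    moreover have "n \<noteq> 1" using p0x plx xy by auto
    moreover have "n \<noteq> 2"
    proof
      assume "n = 2"
      then have "E (p!0) (p!1)" using pw unfolding is_walk_def n_def by auto
      then show False using p0x plx xy \<open>n = 2\<close> by simp
    qed
    ultimately show ?thesis by linarith
  qed
  have aP: "a \<notin> set p" using aZ pZ by auto
  define xs where "xs = p @ [a]"
  have lxs: "length xs = Suc n" by (simp add: xs_def n_def)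
  have cyc: "is_cycle E xs"
    unfolding is_cycle_def xs_def
    using n3 dist aP pw pl ph pne ax sym by (auto simp: walk_append n_def)
  have noch: "j = Suc i mod Suc n \<or> i = Suc j mod Suc n"
    if ij: "i < Suc n" "j < Suc n" "E (xs!i) (xs!j)" for i j
  proof -
    have xi: "xs ! k = (if k < n then p ! k else a)" if "k < Suc n" for k
      using that by (auto simp: xs_def nth_append n_def)
    have key: "k = 0 \<or> k = n - 1" if "k < n" "E a (p!k)" for k
    proof -
      have "p!k \<in> Z" using pZ that by (auto simp: n_def)
      then have "p!k = x \<or> p!k = y" using aZ2 that by blast
      moreover have "p!k = p!0 \<Longrightarrow> k = 0" using dist that n3
        by (subst (asm) nth_eq_iff_index_eq) (auto simp: n_def)
      moreover have "p!k = p!(n-1) \<Longrightarrow> k = n - 1" using dist that n3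
        by (subst (asm) nth_eq_iff_index_eq) (auto simp: n_def)
      ultimately show ?thesis using p0x plx by auto
    qed
    show ?thesis
    proof (cases "i < n")
      case True note i = this
      show ?thesis
      proof (cases "j < n")
        case True
        have E: "E (p!i) (p!j)" using ij i True xi by simp
        have "i \<noteq> j" using E irr by auto
        then consider "i < j" | "j < i" by linarith
        then show ?thesis
        proof cases
          case 1 then have "j = Suc i" using chord E True by blast
          then show ?thesis using True by simp
        next
          case 2 then have "i = Suc j" using chord sym[OF E] i by blast
          then show ?thesis using i by simp
        qed
      next
        case False then have "j = n" using ij by simp
        then have "E a (p!i)" using ij i xi sym by simp
        then have "i = 0 \<or> i = n - 1" using key i by blast
        then show ?thesis using \<open>j = n\<close> n3 by auto
      qed
    next
      case False then have "i = n" using ij by simp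
      show ?thesis
      proof (cases "j < n")
        case True
        then have "E a (p!j)" using ij \<open>i = n\<close> xi by simp
        then have "j = 0 \<or> j = n - 1" using key True by blast
        then show ?thesis using \<open>i = n\<close> n3 by auto
      next
        case False then have "j = n" using ij by simp
        then show ?thesis using ij \<open>i = n\<close> xi irr by simp
      qed
    qed
  qed
  have "induced_cycle E xs" unfolding induced_cycle_def using cyc noch lxs by auto
  moreover have "set xs \<subseteq> insert a Z" using pZ by (auto simp: xs_def)
  moreover have "4 \<le> length xs" using lxs n3 by simp
  ultimately show ?thesis by blast
qed



inductive rch :: "'a set \<Rightarrow> ('a \<Rightarrow> 'a \<Rightarrow> bool) \<Rightarrow> 'a \<Rightarrow> 'a \<Rightarrow> bool" for W E where
  rbase: "x \<in> W \<Longrightarrow> rch W E x x"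
| rstep: "rch W E x y \<Longrightarrow> E y z \<Longrightarrow> z \<in> W \<Longrightarrow> rch W E x z"

lemma rch_in: "rch W E x y \<Longrightarrow> x \<in> W \<and> y \<in> W"
  by (induction rule: rch.induct) auto

lemma rch_trans: "rch W E y z \<Longrightarrow> rch W E x y \<Longrightarrow> rch W E x z"
  by (induction rule: rch.induct) (auto intro: rch.intros)

lemma rch_sym: assumes sym: "\<And>u v. E u v \<Longrightarrow> E v u"
  shows "rch W E x y \<Longrightarrow> rch W E y x"
proof (induction rule: rch.induct)
  case (rbase x) then show ?case by (rule rch.rbase)
next
  case (rstep x y z)
  have "E z y" using sym rstep.hyps(2) by blast
  have "rch W E z y" using rch.rstep[where E=E, OF rch.rbase[OF rstep.hyps(3)] \<open>E z y\<close>] rch_in[OF rstep.hyps(1)] by blast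
  then show ?case using rstep.IH rch_trans by metis
qed

lemma rch_walk: "rch W E x y \<Longrightarrow> \<exists>q. is_walk E q \<and> hd q = x \<and> last q = y \<and> (\<forall>v\<in>set q. rch W E x v)"
proof (induction rule: rch.induct)
  case (rbase x) then show ?case by (intro exI[of _ "[x]"]) (auto intro: rch.intros)
next
  case (rstep x y z)
  then obtain q where q: "is_walk E q" "hd q = x" "last q = y" "\<forall>v\<in>set q. rch W E x v" by blast
  have "q \<noteq> []" using q by auto
  then show ?case using q rstep
    by (intro exI[of _ "q @ [z]"]) (auto simp: walk_append intro: rch.intros)
qed

definition simplicial :: "'a set \<Rightarrow> ('a \<Rightarrow> 'a \<Rightarrow> bool) \<Rightarrow> 'a \<Rightarrow> bool" where
  "simplicial V E s \<longleftrightarrow> (\<forall>u\<in>V. \<forall>w\<in>V. E s u \<longrightarrow> E s w \<longrightarrow> u \<noteq> w \<longrightarrow> E u w)"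

lemma chordal_mono: "chordal V E \<Longrightarrow> V' \<subseteq> V \<Longrightarrow> chordal V' E"
  by (auto simp: chordal_def)

lemma simplicial_aux:
  assumes sym: "\<And>u v. E u v \<Longrightarrow> E v u" and irr: "\<And>u. \<not> E u u"
  shows "finite V \<Longrightarrow> chordal V E \<Longrightarrow> a \<in> V \<Longrightarrow> w \<in> V \<Longrightarrow> w \<noteq> a \<Longrightarrow> \<not> E a w
    \<Longrightarrow> \<exists>s\<in>V. s \<noteq> a \<and> \<not> E a s \<and> simplicial V E s"
proof (induction "card V" arbitrary: V a w rule: less_induct)
  case less
  note fin = less.prems(1) and ch = less.prems(2) and aV = less.prems(3)
    and wV = less.prems(4) and wa = less.prems(5) and naw = less.prems(6)
  define W where "W = {v\<in>V. v \<noteq> a \<and> \<not> E a v}"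
  define C where "C = {v. rch W E w v}"
  define X where "X = {x\<in>V. E a x \<and> (\<exists>c\<in>C. E x c)}"
  have wW: "w \<in> W" using wV wa naw by (simp add: W_def)
  have CW: "C \<subseteq> W" by (auto simp: C_def dest: rch_in)
  have wC: "w \<in> C" using wW by (auto simp: C_def intro: rch.intros)
  have WV: "W \<subseteq> V" by (auto simp: W_def)
  have XV: "X \<subseteq> V" by (auto simp: X_def)
  have claim1: "u \<in> C \<or> u \<in> X" if "c \<in> C" "u \<in> V" "E c u" for c u
  proof -
    have cW: "c \<in> W" using that CW by auto
    have "u \<noteq> a"
    proof
      assume "u = a"
      then have "E a c" using sym that(3) by blast
      then show False using cW by (simp add: W_def)
    qed
    show ?thesis
    proof (cases "E a u")
      case True
      have "E u c" using sym that(3) by blast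
      then show ?thesis using True that by (auto simp: X_def)
    next
      case False
      then have "u \<in> W" using \<open>u \<noteq> a\<close> that by (simp add: W_def)
      then show ?thesis using that by (auto simp: C_def intro: rch.intros)
    qed
  qed
  have claim2: "E x y" if xX: "x \<in> X" and yX: "y \<in> X" and "x \<noteq> y" for x y
  proof (rule ccontr)
    assume nxy: "\<not> E x y"
    obtain cx where cx: "cx \<in> C" "E x cx" using xX by (auto simp: X_def)
    obtain cy where cy: "cy \<in> C" "E y cy" using yX by (auto simp: X_def)
    have "rch W E w cx" "rch W E w cy" using cx cy by (auto simp: C_def)
    have "rch W E cx w" by (rule rch_sym[where E=E, OF sym \<open>rch W E w cx\<close>])
    have "rch W E cx cy" by (rule rch_trans[OF \<open>rch W E w cy\<close> \<open>rch W E cx w\<close>])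
    then obtain q where q: "is_walk E q" "hd q = cx" "last q = cy" "\<forall>v\<in>set q. rch W E cx v"
      using rch_walk[OF \<open>rch W E cx cy\<close>] by blast
    have qC: "set q \<subseteq> C"
    proof
      fix v assume "v \<in> set q"
      then have "rch W E cx v" using q(4) by blast
      then have "rch W E w v" by (rule rch_trans[OF _ \<open>rch W E w cx\<close>])
      then show "v \<in> C" by (simp add: C_def)
    qed
    have qne: "q \<noteq> []" using q by auto
    define p where "p = x # q @ [y]"
    have "E cy y" using sym cy(2) by blast
    have "is_walk E (q @ [y])" using q qne \<open>E cy y\<close> by (simp add: walk_append)
    then have pw: "is_walk E p" unfolding p_def using q qne cx by (simp add: walk_Cons)
    define Z where "Z = insert x (insert y C)"
    have aZ: "a \<notin> Z" using irr xX yX CW by (auto simp: Z_def X_def W_def)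
    have aZ2: "z = x \<or> z = y" if "z \<in> Z" "E a z" for z
      using that CW by (auto simp: Z_def W_def)
    have Eax: "E a x" "E a y" using xX yX by (auto simp: X_def)
    have p1: "hd p = x" "last p = y" by (simp_all add: p_def)
    have p2: "set p \<subseteq> Z" using qC by (auto simp: p_def Z_def)
    obtain xs where xs: "set xs \<subseteq> insert a Z" "4 \<le> length xs" "induced_cycle E xs"
      using path_to_induced_cycle[where E=E, OF sym irr \<open>x \<noteq> y\<close> nxy Eax aZ aZ2 pw p1 p2] by blast
    have "insert a Z \<subseteq> V" using aV xX yX CW WV by (auto simp: Z_def X_def)
    then show False using ch xs by (auto simp: chordal_def)
  qed
  define V' where "V' = C \<union> X"
  have V'V: "V' \<subseteq> V" using CW WV XV by (auto simp: V'_def)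
  have aV': "a \<notin> V'" using CW irr by (auto simp: V'_def W_def X_def)
  have card: "card V' < card V" using V'V aV' aV fin by (intro psubset_card_mono) auto
  have fin': "finite V'" using V'V fin finite_subset by blast
  have ch': "chordal V' E" using ch V'V chordal_mono by blast
  have good: "\<exists>s\<in>V. s \<noteq> a \<and> \<not> E a s \<and> simplicial V E s"
    if "s \<in> C" "simplicial V' E s" for s
  proof -
    have "s \<in> W" using that CW by auto
    moreover have "simplicial V E s"
      unfolding simplicial_def
    proof (intro ballI impI)
      fix u v assume "u \<in> V" "v \<in> V" "E s u" "E s v" "u \<noteq> v"
      then have "u \<in> V'" "v \<in> V'" using claim1 that by (auto simp: V'_def)
      then show "E u v" using that \<open>E s u\<close> \<open>E s v\<close> \<open>u \<noteq> v\<close> by (auto simp: simplicial_def)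
    qed
    ultimately show ?thesis using WV by (auto simp: W_def)
  qed
  show ?case
  proof (cases "\<forall>u\<in>V'. \<forall>v\<in>V'. u \<noteq> v \<longrightarrow> E u v")
    case True
    then have "simplicial V' E w" by (auto simp: simplicial_def)
    then show ?thesis using good wC by blast
  next
    case False
    show ?thesis
    proof (cases "\<exists>x\<in>X. \<exists>v\<in>V'. v \<noteq> x \<and> \<not> E x v")
      case True
      then obtain x v where xv: "x \<in> X" "v \<in> V'" "v \<noteq> x" "\<not> E x v" by blast
      have "x \<in> V'" using xv by (simp add: V'_def)
      from less.hyps[OF card fin' ch' this xv(2-4)]
      obtain s where s: "s \<in> V'" "s \<noteq> x" "\<not> E x s" "simplicial V' E s" by blast
      have "s \<notin> X" using s(2,3) xv(1) claim2[of x s] by auto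
      then have "s \<in> C" using s by (simp add: V'_def)
      then show ?thesis using good s by blast
    next
      case False2: False
      obtain u v where uv: "u \<in> V'" "v \<in> V'" "u \<noteq> v" "\<not> E u v" using False by blast
      have "u \<notin> X" using False2 uv by auto
      from less.hyps[OF card fin' ch' uv(1) uv(2) uv(3)[symmetric] uv(4)]
      obtain s where s: "s \<in> V'" "s \<noteq> u" "\<not> E u s" "simplicial V' E s" by blast
      have "s \<notin> X"
      proof
        assume "s \<in> X"
        then have "E s u" using False2 uv(1) s(2) by auto
        then show False using s(3) sym by blast
      qed
      then have "s \<in> C" using s by (simp add: V'_def)
      then show ?thesis using good s by blast
    qed
  qed
qed

lemma simplicial_exists:
  assumes sym: "\<And>u v. E u v \<Longrightarrow> E v u" and irr: "\<And>u. \<not> E u u"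
    and "finite V" "chordal V E" "V \<noteq> {}"
  shows "\<exists>s\<in>V. simplicial V E s"
proof (cases "\<exists>a\<in>V. \<exists>w\<in>V. w \<noteq> a \<and> \<not> E a w")
  case True
  then obtain a w where "a \<in> V" "w \<in> V" "w \<noteq> a" "\<not> E a w" by blast
  from simplicial_aux[OF sym irr assms(3,4) this] show ?thesis by blast
next
  case False
  obtain x where "x \<in> V" using assms(5) by blast
  moreover have "simplicial V E x" using False unfolding simplicial_def by metis
  ultimately show ?thesis by blast
qed



definition add_edge :: "('b \<Rightarrow> 'b \<Rightarrow> bool) \<Rightarrow> 'b \<Rightarrow> 'b \<Rightarrow> 'b \<Rightarrow> 'b \<Rightarrow> bool" where
  "add_edge A x y = (\<lambda>u v. A u v \<or> (u = x \<and> v = y) \<or> (u = y \<and> v = x))"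

lemma conn_mono: "connected_on S A \<Longrightarrow> (\<And>u v. A u v \<Longrightarrow> A' u v) \<Longrightarrow> connected_on S A'"
  unfolding connected_on_def
proof (intro ballI)
  fix u v assume c: "\<forall>u\<in>S. \<forall>v\<in>S. \<exists>xs. is_walk A xs \<and> set xs \<subseteq> S \<and> hd xs = u \<and> last xs = v"
    and m: "\<And>u v. A u v \<Longrightarrow> A' u v" and uv: "u \<in> S" "v \<in> S"
  then obtain xs where xs: "is_walk A xs" "set xs \<subseteq> S" "hd xs = u" "last xs = v" by blast
  have "is_walk A' xs" using walk_mono_on[OF xs(1)] m by blast
  then show "\<exists>xs. is_walk A' xs \<and> set xs \<subseteq> S \<and> hd xs = u \<and> last xs = v" using xs by blast
qed

lemma conn_single: "connected_on {y} A"
  unfolding connected_on_def by (auto intro!: exI[of _ "[y]"])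

lemma conn_get: "connected_on S A \<Longrightarrow> u \<in> S \<Longrightarrow> v \<in> S \<Longrightarrow>
   \<exists>xs. is_walk A xs \<and> set xs \<subseteq> S \<and> hd xs = u \<and> last xs = v"
  unfolding connected_on_def by blast

lemma conn_insert:
  assumes c: "connected_on S A" and xS: "x \<in> S" and e: "A' x y" "A' y x"
    and m: "\<And>u v. A u v \<Longrightarrow> A' u v"
  shows "connected_on (insert y S) A'"
proof -
  have c': "connected_on S A'" by (rule conn_mono[where A'=A', OF c m])
  have fromx: "\<exists>xs. is_walk A' xs \<and> set xs \<subseteq> insert y S \<and> hd xs = y \<and> last xs = v" if "v \<in> S" for v
  proof -
    obtain xs where xs: "is_walk A' xs" "set xs \<subseteq> S" "hd xs = x" "last xs = v"
      using conn_get[OF c' xS \<open>v \<in> S\<close>] by blast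
    have "xs \<noteq> []" using xs by auto
    then have "is_walk A' (y # xs)" using xs e by (simp add: walk_Cons)
    then show ?thesis using xs by (intro exI[of _ "y # xs"]) auto
  qed
  have tox: "\<exists>xs. is_walk A' xs \<and> set xs \<subseteq> insert y S \<and> hd xs = u \<and> last xs = y" if "u \<in> S" for u
  proof -
    obtain xs where xs: "is_walk A' xs" "set xs \<subseteq> S" "hd xs = u" "last xs = x"
      using conn_get[OF c' \<open>u \<in> S\<close> xS] by blast
    have "xs \<noteq> []" using xs by auto
    then have "is_walk A' (xs @ [y])" using xs e by (simp add: walk_append)
    then show ?thesis using xs \<open>xs \<noteq> []\<close> by (intro exI[of _ "xs @ [y]"]) auto
  qed
  show ?thesis unfolding connected_on_def
  proof (intro ballI)
    fix u v assume uv: "u \<in> insert y S" "v \<in> insert y S"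
    show "\<exists>xs. is_walk A' xs \<and> set xs \<subseteq> insert y S \<and> hd xs = u \<and> last xs = v"
    proof (cases "u = y")
      case True
      show ?thesis
      proof (cases "v = y")
        case True then show ?thesis using \<open>u = y\<close> by (intro exI[of _ "[y]"]) auto
      next
        case False then have "v \<in> S" using uv by simp
        from fromx[OF this] show ?thesis using \<open>u = y\<close> by simp
      qed
    next
      case False
      then have uS: "u \<in> S" using uv by auto
      show ?thesis
      proof (cases "v = y")
        case True from tox[OF uS] show ?thesis using True by simp
      next
        case False then have "v \<in> S" using uv by auto
        then obtain xs where "is_walk A' xs" "set xs \<subseteq> S" "hd xs = u" "last xs = v"
          using conn_get[OF c' uS \<open>v \<in> S\<close>] by blast
        then show ?thesis by blast
      qed
    qed
  qed
qed

lemma cycle_next: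
  assumes "is_cycle E xs" "k < length xs"
  shows "E (xs!k) (xs!(if Suc k < length xs then Suc k else 0))"
proof (cases "Suc k < length xs")
  case True then show ?thesis using assms unfolding is_cycle_def is_walk_def by auto
next
  case False
  then have "k = length xs - 1" using assms by simp
  moreover have "xs \<noteq> []" using assms by auto
  ultimately show ?thesis using assms False
    unfolding is_cycle_def by (simp add: last_conv_nth hd_conv_nth)
qed

lemma tree_add:
  assumes t: "is_tree N A" and xN: "x \<in> N" and yN: "y \<notin> N"
  shows "is_tree (insert y N) (add_edge A x y)"
proof -
  let ?A = "add_edge A x y"
  have sg: "simple_graph N A" "N \<noteq> {}" "connected_on N A" and nc: "\<not> (\<exists>xs. set xs \<subseteq> N \<and> is_cycle A xs)"
    using t by (auto simp: is_tree_def)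
  have xy: "x \<noteq> y" using xN yN by auto
  have sg': "simple_graph (insert y N) ?A"
    using sg(1) xN xy unfolding simple_graph_def add_edge_def by auto
  have co: "connected_on (insert y N) ?A"
    by (rule conn_insert[OF sg(3) xN]) (auto simp: add_edge_def)
  have Ay: "A y v \<Longrightarrow> False" "A v y \<Longrightarrow> False" for v
    using sg(1) yN unfolding simple_graph_def by auto
  have nc': "\<not> (\<exists>xs. set xs \<subseteq> insert y N \<and> is_cycle ?A xs)"
  proof
    assume "\<exists>xs. set xs \<subseteq> insert y N \<and> is_cycle ?A xs"
    then obtain xs where xs: "set xs \<subseteq> insert y N" "is_cycle ?A xs" by blast
    define n where "n = length xs"
    have n3: "3 \<le> n" and dist: "distinct xs" using xs by (auto simp: is_cycle_def n_def)
    show False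
    proof (cases "y \<in> set xs")
      case True
      then obtain k where k: "k < n" "xs ! k = y" by (auto simp: in_set_conv_nth n_def)
      define j1 where "j1 = (if Suc k < n then Suc k else 0)"
      define j0 where "j0 = (if k = 0 then n - 1 else k - 1)"
      have j0n: "j0 < n" using k n3 by (auto simp: j0_def)
      have j1n: "j1 < n" using k n3 by (auto simp: j1_def)
      have nj0: "(if Suc j0 < n then Suc j0 else 0) = k" using k n3 by (auto simp: j0_def)
      have e1: "?A (xs!k) (xs!j1)" using cycle_next[OF xs(2), of k] k by (simp add: j1_def n_def)
      have e0: "?A (xs!j0) (xs!k)" using cycle_next[OF xs(2) j0n[unfolded n_def]] nj0 by (simp add: n_def)
      have "xs!j1 = x" using e1 k Ay by (auto simp: add_edge_def)
      moreover have "xs!j0 = x" using e0 k Ay by (auto simp: add_edge_def)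
      moreover have "j0 \<noteq> j1" using k n3 by (auto simp: j0_def j1_def)
      ultimately show False using nth_eq_iff_index_eq[OF dist, of j0 j1] j0n j1n by (simp add: n_def)
    next
      case False
      have mo: "\<forall>u\<in>set xs. \<forall>v\<in>set xs. ?A u v \<longrightarrow> A u v" using False by (auto simp: add_edge_def)
      have w: "is_walk ?A xs" "?A (last xs) (hd xs)" using xs(2) by (auto simp: is_cycle_def)
      have ne: "xs \<noteq> []" using w by auto
      have "is_walk A xs" by (rule walk_mono_on[OF w(1) mo])
      moreover have "A (last xs) (hd xs)" using mo w(2) ne by simp
      ultimately have "is_cycle A xs" using xs(2) by (simp add: is_cycle_def)
      moreover have "set xs \<subseteq> N" using False xs(1) by auto
      ultimately show False using nc by blast
    qed
  qed
  show ?thesis using sg' co nc' by (simp add: is_tree_def)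
qed



definition clq :: "('a \<Rightarrow> 'a \<Rightarrow> bool) \<Rightarrow> 'a set \<Rightarrow> bool" where
  "clq E K \<longleftrightarrow> (\<forall>u\<in>K. \<forall>w\<in>K. u \<noteq> w \<longrightarrow> E u w)"

lemma tree_single: "is_tree {0::nat} (\<lambda>_ _. False)"
proof -
  have "\<not> is_cycle (\<lambda>_ _. False) xs" if "set xs \<subseteq> {0::nat}" for xs
  proof
    assume c: "is_cycle (\<lambda>_ _. False) xs"
    then have "distinct xs" "3 \<le> length xs" by (auto simp: is_cycle_def)
    then have "card (set xs) \<ge> 3" by (simp add: distinct_card)
    moreover have "card (set xs) \<le> 1" using card_mono[OF _ that] by simp
    ultimately show False by simp
  qed
  moreover have "simple_graph {0::nat} (\<lambda>_ _. False)" by (simp add: simple_graph_def)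
  moreover have "connected_on {0::nat} (\<lambda>_ _. False)" by (rule conn_single)
  ultimately show ?thesis unfolding is_tree_def by blast
qed

lemma rep:
  assumes sym: "\<And>u v. E u v \<Longrightarrow> E v u" and irr: "\<And>u. \<not> E u u"
  shows "finite V \<Longrightarrow> chordal V E \<Longrightarrow> \<exists>(N::nat set) A S T. is_tree N A \<and> (\<forall>v\<in>V. is_subtree N A (S v))
     \<and> inj_on S V \<and> (\<forall>u\<in>V. \<forall>v\<in>V. u \<noteq> v \<longrightarrow> (E u v \<longleftrightarrow> S u \<inter> S v \<noteq> {}))
     \<and> T \<subseteq> N \<and> (\<forall>v\<in>V. card (T \<inter> S v) = 1) \<and> (\<forall>K\<subseteq>V. clq E K \<longrightarrow> (\<exists>p\<in>N. \<forall>u\<in>K. p \<in> S u))"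
proof (induction "card V" arbitrary: V rule: less_induct)
  case less
  note fin = less.prems(1) and ch = less.prems(2)
  show ?case
  proof (cases "V = {}")
    case True
    have "is_tree {0::nat} (\<lambda>_ _. False)" by (rule tree_single)
    moreover have "{0::nat} \<subseteq> {0}" by simp
    ultimately show ?thesis using True
      by (intro exI[of _ "{0::nat}"] exI[of _ "\<lambda>_ _. False"] exI[of _ "\<lambda>_. {0::nat}"] exI[of _ "{0::nat}"]) auto
  next
    case False
    obtain s where sV: "s \<in> V" and simp_s: "simplicial V E s"
      using simplicial_exists[where E=E, OF sym irr fin ch False] by blast
    define V0 where "V0 = V - {s}"
    have card: "card V0 < card V" unfolding V0_def by (rule card_Diff1_less[OF fin sV])
    have fin0: "finite V0" using fin by (simp add: V0_def)
    have ch0: "chordal V0 E" using ch chordal_mono[of V E V0] by (auto simp: V0_def)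
    obtain N A S T where t: "is_tree N A" and st: "\<forall>v\<in>V0. is_subtree N A (S v)"
      and inj: "inj_on S V0" and ig: "\<forall>u\<in>V0. \<forall>v\<in>V0. u \<noteq> v \<longrightarrow> (E u v \<longleftrightarrow> S u \<inter> S v \<noteq> {})"
      and TN: "T \<subseteq> (N::nat set)" and hit: "\<forall>v\<in>V0. card (T \<inter> S v) = 1"
      and cl: "\<forall>K\<subseteq>V0. clq E K \<longrightarrow> (\<exists>p\<in>N. \<forall>u\<in>K. p \<in> S u)"
      using less.hyps[OF card fin0 ch0] by (elim exE conjE) (rule that; assumption)
    define K0 where "K0 = {u\<in>V0. E s u}"
    have "clq E K0" using simp_s by (auto simp: clq_def K0_def V0_def simplicial_def)
    moreover have "K0 \<subseteq> V0" by (auto simp: K0_def)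
    ultimately obtain p where pN: "p \<in> N" and pK: "\<forall>u\<in>K0. p \<in> S u" using cl by blast
    have finN: "finite N" using t by (simp add: is_tree_def simple_graph_def)
    define y where "y = Suc (Max N)"
    define z where "z = Suc y"
    have yN: "y \<notin> N" using Max_ge[OF finN, of y] by (auto simp: y_def)
    have zN: "z \<notin> N" using Max_ge[OF finN, of z] by (auto simp: z_def y_def)
    have yz: "y \<noteq> z" by (simp add: z_def)
    define A1 where "A1 = add_edge A p y"
    define A2 where "A2 = add_edge A1 y z"
    define N2 where "N2 = insert z (insert y N)"
    have t1: "is_tree (insert y N) A1" unfolding A1_def by (rule tree_add[OF t pN yN])
    have t2: "is_tree N2 A2" unfolding A2_def N2_def by (rule tree_add[OF t1]) (use yz zN in auto)
    have AA2: "A u v \<Longrightarrow> A2 u v" for u v by (simp add: A2_def A1_def add_edge_def)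
    define S2 where "S2 u = (if u = s then {y, z} else if E s u then insert y (S u) else S u)" for u
    have SN: "S u \<subseteq> N" if "u \<in> V0" for u using st that by (auto simp: is_subtree_def)
    have yS: "y \<notin> S u" "z \<notin> S u" if "u \<in> V0" for u using SN[OF that] yN zN by auto
    have S2V0: "S2 u = (if E s u then insert y (S u) else S u)" if "u \<in> V0" for u
      using that by (auto simp: S2_def V0_def)
    have S2back: "S2 u - {y} = S u" if "u \<in> V0" for u using S2V0[OF that] yS[OF that] by auto
    have zS2: "z \<notin> S2 u" if "u \<in> V0" for u using S2V0[OF that] yS[OF that] yz by auto
    have st2: "\<forall>v\<in>V. is_subtree N2 A2 (S2 v)"
    proof
      fix v assume vV: "v \<in> V"
      show "is_subtree N2 A2 (S2 v)"
      proof (cases "v = s")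
        case True
        have "connected_on (insert z {y}) A2"
          by (rule conn_insert[OF conn_single, of y]) (auto simp: A2_def add_edge_def)
        then show ?thesis using True by (auto simp: is_subtree_def S2_def N2_def insert_commute)
      next
        case False
        then have v0: "v \<in> V0" using vV by (simp add: V0_def)
        have sub: "S v \<noteq> {}" "S v \<subseteq> N" "connected_on (S v) A" using st v0 by (auto simp: is_subtree_def)
        show ?thesis
        proof (cases "E s v")
          case True
          have "p \<in> S v" using pK v0 True by (simp add: K0_def)
          have "connected_on (insert y (S v)) A2"
            by (rule conn_insert[OF sub(3) \<open>p \<in> S v\<close>]) (auto simp: A2_def A1_def add_edge_def)
          then show ?thesis using S2V0[OF v0] True sub by (auto simp: is_subtree_def N2_def)
        next
          case False
          have "connected_on (S v) A2" by (rule conn_mono[OF sub(3)]) (rule AA2)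
          then show ?thesis using S2V0[OF v0] False sub by (auto simp: is_subtree_def N2_def)
        qed
      qed
    qed
    have inj2: "inj_on S2 V"
    proof (rule inj_onI)
      fix u w assume uV: "u \<in> V" and wV: "w \<in> V" and eq: "S2 u = S2 w"
      show "u = w"
      proof (cases "u = s \<or> w = s")
        case True
        then show ?thesis
        proof
          assume "u = s"
          then have "z \<in> S2 w" using eq by (simp add: S2_def)
          then show ?thesis using zS2[of w] wV \<open>u = s\<close> by (auto simp: V0_def)
        next
          assume "w = s"
          then have "z \<in> S2 u" using eq by (simp add: S2_def)
          then show ?thesis using zS2[of u] uV \<open>w = s\<close> by (auto simp: V0_def)
        qed
      next
        case False
        then have "u \<in> V0" "w \<in> V0" using uV wV by (auto simp: V0_def)
        then have "S u = S w" using S2back eq by metis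
        then show ?thesis using inj \<open>u \<in> V0\<close> \<open>w \<in> V0\<close> by (auto dest: inj_onD)
      qed
    qed
    have ig2: "\<forall>u\<in>V. \<forall>w\<in>V. u \<noteq> w \<longrightarrow> (E u w \<longleftrightarrow> S2 u \<inter> S2 w \<noteq> {})"
    proof (intro ballI impI)
      fix u w assume uV: "u \<in> V" and wV: "w \<in> V" and uw: "u \<noteq> w"
      have case_s: "E s w' \<longleftrightarrow> S2 s \<inter> S2 w' \<noteq> {}" if "w' \<in> V0" for w'
        using S2V0[OF that] yS[OF that] by (auto simp: S2_def)
      show "E u w \<longleftrightarrow> S2 u \<inter> S2 w \<noteq> {}"
      proof (cases "u = s")
        case True
        then have "w \<in> V0" using wV uw by (auto simp: V0_def)
        then show ?thesis using case_s True by blast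
      next
        case uns: False
        show ?thesis
        proof (cases "w = s")
          case True
          then have "u \<in> V0" using uV uw by (auto simp: V0_def)
          have "E u w \<longleftrightarrow> E s u" using True sym by blast
          moreover have "S2 u \<inter> S2 w = S2 s \<inter> S2 u" using True by blast
          ultimately show ?thesis using case_s[OF \<open>u \<in> V0\<close>] by simp
        next
          case False
          then have u0: "u \<in> V0" and w0: "w \<in> V0" using uV wV uns by (auto simp: V0_def)
          show ?thesis
          proof (cases "E s u \<and> E s w")
            case True
            then have "E u w" using simp_s uV wV uw by (auto simp: simplicial_def)
            moreover have "y \<in> S2 u \<inter> S2 w" using True S2V0[OF u0] S2V0[OF w0] by simp
            ultimately show ?thesis by blast
          next
            case False
            then have "S2 u \<inter> S2 w = S u \<inter> S w"
              using S2V0[OF u0] S2V0[OF w0] yS[OF u0] yS[OF w0] by auto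
            then show ?thesis using ig u0 w0 uw by simp
          qed
        qed
      qed
    qed
    define T2 where "T2 = insert z T"
    have TN2: "T2 \<subseteq> N2" using TN by (auto simp: T2_def N2_def)
    have hit2: "\<forall>v\<in>V. card (T2 \<inter> S2 v) = 1"
    proof
      fix v assume vV: "v \<in> V"
      show "card (T2 \<inter> S2 v) = 1"
      proof (cases "v = s")
        case True
        have "T2 \<inter> S2 v = {z}" using True TN yN yz by (auto simp: T2_def S2_def)
        then show ?thesis by simp
      next
        case False
        then have v0: "v \<in> V0" using vV by (simp add: V0_def)
        have "T2 \<inter> S2 v = T \<inter> S v" using S2V0[OF v0] zS2[OF v0] TN yN by (auto simp: T2_def)
        then show ?thesis using hit v0 by simp
      qed
    qed
    have cl2: "\<forall>K\<subseteq>V. clq E K \<longrightarrow> (\<exists>q\<in>N2. \<forall>u\<in>K. q \<in> S2 u)"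
    proof (intro allI impI)
      fix K assume KV: "K \<subseteq> V" and cK: "clq E K"
      show "\<exists>q\<in>N2. \<forall>u\<in>K. q \<in> S2 u"
      proof (cases "s \<in> K")
        case True
        have "\<forall>u\<in>K. y \<in> S2 u"
        proof
          fix u assume "u \<in> K"
          show "y \<in> S2 u"
          proof (cases "u = s")
            case True then show ?thesis by (simp add: S2_def)
          next
            case False
            then have "E s u" using cK \<open>s \<in> K\<close> \<open>u \<in> K\<close> by (auto simp: clq_def)
            then show ?thesis using False by (simp add: S2_def)
          qed
        qed
        then show ?thesis by (auto simp: N2_def)
      next
        case False
        then have "K \<subseteq> V0" using KV by (auto simp: V0_def)
        then obtain q where "q \<in> N" "\<forall>u\<in>K. q \<in> S u" using cl cK by blast
        moreover have "\<forall>u\<in>K. S u \<subseteq> S2 u" using \<open>K \<subseteq> V0\<close> S2V0 by auto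
        ultimately have "q \<in> N2" "\<forall>u\<in>K. q \<in> S2 u" by (auto simp: N2_def)
        then show ?thesis by blast
      qed
    qed
    show ?thesis
      apply (rule exI[of _ N2], rule exI[of _ A2], rule exI[of _ S2], rule exI[of _ T2])
      using t2 st2 inj2 ig2 TN2 hit2 cl2 by (intro conjI)
  qed
qed



lemma minmax_eq: "min (a::nat) b = min c d \<Longrightarrow> max a b = max c d \<Longrightarrow> (a = c \<and> b = d) \<or> (a = d \<and> b = c)"
  by (auto simp: min_def max_def split: if_splits)

lemma part1:
  assumes g: "simple_graph V E"
  shows "\<exists>(U :: nat set) S. (\<forall>v\<in>V. S v \<subseteq> U) \<and> is_intersection_graph_of V E S
            \<and> exactly_hittable U (S ` V)"
proof -
  have fin: "finite V" and Ein: "\<And>u v. E u v \<Longrightarrow> u \<in> V \<and> v \<in> V \<and> u \<noteq> v \<and> E v u"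
    using g by (auto simp: simple_graph_def)
  obtain f :: "'a \<Rightarrow> nat" where inj: "inj_on f V"
    using finite_imp_inj_to_nat_seg[OF fin] by blast
  define code where "code u w = (2 * prod_encode (min (f u) (f w), max (f u) (f w)) + 1 :: nat)" for u w
  have code_sym: "code u w = code w u" for u w by (simp add: code_def min.commute max.commute)
  have code_eq: "(f u = f u' \<and> f w = f w') \<or> (f u = f w' \<and> f w = f u')" if "code u w = code u' w'" for u w u' w'
  proof -
    have "prod_encode (min (f u) (f w), max (f u) (f w)) = prod_encode (min (f u') (f w'), max (f u') (f w'))"
      using that by (simp add: code_def)
    then have "min (f u) (f w) = min (f u') (f w')" "max (f u) (f w) = max (f u') (f w')"
      using inj_prod_encode[of UNIV] by (auto dest: inj_onD)
    then show ?thesis by (rule minmax_eq)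
  qed
  have even_odd: "2 * a \<noteq> code u w" for a u w by (simp add: code_def) presburger
  define S where "S v = insert (2 * f v) {code v w | w. w \<in> V \<and> E v w}" for v
  define U where "U = \<Union> (S ` V)"
  define T where "T = (\<lambda>v. 2 * f v) ` V"
  have twoS: "u = v" if "u \<in> V" "v \<in> V" "2 * f u \<in> S v" for u v
  proof -
    have "2 * f u = 2 * f v" using that(3) even_odd by (auto simp: S_def)
    then show ?thesis using inj that(1,2) by (auto dest: inj_onD)
  qed
  have injS: "inj_on S V"
  proof (rule inj_onI)
    fix u v assume "u \<in> V" "v \<in> V" "S u = S v"
    moreover have "2 * f u \<in> S u" by (simp add: S_def)
    ultimately show "u = v" using twoS by metis
  qed
  have ig: "E u v \<longleftrightarrow> S u \<inter> S v \<noteq> {}" if uV: "u \<in> V" and vV: "v \<in> V" and uv: "u \<noteq> v" for u v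
  proof
    assume "E u v"
    then have "code u v \<in> S u" "code v u \<in> S v" using Ein[of u v] by (auto simp: S_def)
    then show "S u \<inter> S v \<noteq> {}" using code_sym by auto
  next
    assume "S u \<inter> S v \<noteq> {}"
    then obtain t where tu: "t \<in> S u" and tv: "t \<in> S v" by blast
    show "E u v"
    proof (cases "t = 2 * f u")
      case True then show ?thesis using twoS[OF uV vV] tv uv by simp
    next
      case False
      then obtain w where w: "w \<in> V" "E u w" "t = code u w" using tu by (auto simp: S_def)
      show ?thesis
      proof (cases "t = 2 * f v")
        case True then show ?thesis using even_odd[of "f v" u w] w by simp
      next
        case False
        then obtain w' where w': "w' \<in> V" "E v w'" "t = code v w'" using tv by (auto simp: S_def)
        have "f u \<noteq> f v" using inj uV vV uv by (auto dest: inj_onD)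
        then have "f u = f w'" using code_eq[of u w v w'] w w' by auto
        then have "u = w'" using inj uV w'(1) by (auto dest: inj_onD)
        then show ?thesis using w'(2) Ein by blast
      qed
    qed
  qed
  have hit: "card (T \<inter> S v) = 1" if vV: "v \<in> V" for v
  proof -
    have "T \<inter> S v = {2 * f v}" using twoS[OF _ vV] vV by (auto simp: T_def S_def)
    then show ?thesis by simp
  qed
  have "\<forall>v\<in>V. S v \<subseteq> U" by (auto simp: U_def)
  moreover have "is_intersection_graph_of V E S" using injS ig by (simp add: is_intersection_graph_of_def)
  moreover have "exactly_hittable U (S ` V)"
    unfolding exactly_hittable_def using hit by (intro exI[of _ T]) (auto simp: T_def U_def S_def)
  ultimately show ?thesis by blast
qed


theorem theorem10:
  fixes V :: "'a set" and E :: "'a \<Rightarrow> 'a \<Rightarrow> bool"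
  assumes "simple_graph V E"
  shows "(\<exists>(U :: nat set) S. (\<forall>v\<in>V. S v \<subseteq> U) \<and> is_intersection_graph_of V E S
            \<and> exactly_hittable U (S ` V))
       \<and> (connected_on V E \<and> chordal V E \<longrightarrow>
          (\<exists>(N :: nat set) A S. is_tree N A \<and> (\<forall>v\<in>V. is_subtree N A (S v))
            \<and> is_intersection_graph_of V E S \<and> exactly_hittable N (S ` V)))"
proof (intro conjI impI)
  show "\<exists>(U :: nat set) S. (\<forall>v\<in>V. S v \<subseteq> U) \<and> is_intersection_graph_of V E S
            \<and> exactly_hittable U (S ` V)" by (rule part1[OF assms])
next
  assume "connected_on V E \<and> chordal V E"
  then have ch: "chordal V E" by simp
  have symE: "E u v \<Longrightarrow> E v u" for u v using assms by (auto simp: simple_graph_def)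
  have irrE: "\<not> E u u" for u using assms by (auto simp: simple_graph_def)
  have fin: "finite V" using assms by (auto simp: simple_graph_def)
  have ex: "\<exists>(N::nat set) A S T. is_tree N A \<and> (\<forall>v\<in>V. is_subtree N A (S v))
     \<and> inj_on S V \<and> (\<forall>u\<in>V. \<forall>v\<in>V. u \<noteq> v \<longrightarrow> (E u v \<longleftrightarrow> S u \<inter> S v \<noteq> {}))
     \<and> T \<subseteq> N \<and> (\<forall>v\<in>V. card (T \<inter> S v) = 1) \<and> (\<forall>K\<subseteq>V. clq E K \<longrightarrow> (\<exists>p\<in>N. \<forall>u\<in>K. p \<in> S u))"
    by (rule rep[of E V]) (fact symE, fact irrE, fact fin, fact ch)
  obtain N A S T where t: "is_tree N A" and st: "\<forall>v\<in>V. is_subtree N A (S v)"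
      and inj: "inj_on S V" and ig: "\<forall>u\<in>V. \<forall>v\<in>V. u \<noteq> v \<longrightarrow> (E u v \<longleftrightarrow> S u \<inter> S v \<noteq> {})"
      and TN: "T \<subseteq> (N::nat set)" and hit: "\<forall>v\<in>V. card (T \<inter> S v) = 1"
    using ex by (elim exE conjE) (rule that; assumption)
  have "is_intersection_graph_of V E S" using inj ig by (simp add: is_intersection_graph_of_def)
  moreover have "exactly_hittable N (S ` V)" unfolding exactly_hittable_def
    using TN hit by (intro exI[of _ T]) auto
  ultimately show "\<exists>(N :: nat set) A S. is_tree N A \<and> (\<forall>v\<in>V. is_subtree N A (S v))
            \<and> is_intersection_graph_of V E S \<and> exactly_hittable N (S ` V)"
    using t st by blast
qed

end
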